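(* Let $\langle A,\to\rangle$ be a conditional algebra. There exists a dual lattice isomorphism between the lattice of congruences of $\langle A,\to\rangle$ and the lattice (ordered by inclusion) of $T_A$-closed subsets of the expanded Stone space $\langle\mathrm{Ul}(A),\tau_s,T_A\rangle$.
   Context: A conditional algebra is $\langle A,\to\rangle$ with $A$ a Boolean algebra and $\to$ binary with $a\to1=1$, $(a\to b)\wedge(a\to c)=a\to(b\wedge c)$, $(a\vee b)\to c\le(a\to c)\wedge(b\to c)$. $\mathrm{Ul}(A)$ is the Stone space of ultrafilters; closed sets are $\varphi(F)=\{u:F\subseteq u\}$ for filters $F$ (including $F=A$). $D^{\to}_u(F)=\{b:\exists a\in F,\ a\to b\in u\}$; $T_A(u,Z,v)$ iff there is a filter $F$ with $Z=\varphi(F)$ and $D^{\to}_u(F)\subseteq v$. For ultrafilters $x,y$, $\mathbf{C}(x,y)$ is the set of closed $Z$ with $T_A(x,Z,y)$. A closed set $Y$ is $T_A$-closed if for all $x,y$: if $x\in Y$ and $Z$ is a minimal element of $\mathbf{C}(x,y)$ under inclusion, then $Z\subseteq Y$ and $y\in Y$. *)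

theory Defs
  imports Main
begin

definition conditional_algebra :: "('a::boolean_algebra \<Rightarrow> 'a \<Rightarrow> 'a) \<Rightarrow> bool" where
  "conditional_algebra imp \<longleftrightarrow>
     (\<forall>a. imp a top = top) \<and>
     (\<forall>a b c. inf (imp a b) (imp a c) = imp a (inf b c)) \<and>
     (\<forall>a b c. imp (sup a b) c \<le> inf (imp a c) (imp b c))"

definition congruence :: "('a::boolean_algebra \<Rightarrow> 'a \<Rightarrow> 'a) \<Rightarrow> 'a rel \<Rightarrow> bool" where
  "congruence imp \<theta> \<longleftrightarrow> equiv UNIV \<theta> \<and>
     (\<forall>a b c d. (a, b) \<in> \<theta> \<longrightarrow> (c, d) \<in> \<theta> \<longrightarrow>
        (inf a c, inf b d) \<in> \<theta> \<and> (sup a c, sup b d) \<in> \<theta> \<and> (imp a c, imp b d) \<in> \<theta>) \<and>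
     (\<forall>a b. (a, b) \<in> \<theta> \<longrightarrow> (- a, - b) \<in> \<theta>)"

definition is_filter :: "'a::boolean_algebra set \<Rightarrow> bool" where
  "is_filter F \<longleftrightarrow> top \<in> F \<and> (\<forall>a\<in>F. \<forall>b. a \<le> b \<longrightarrow> b \<in> F) \<and> (\<forall>a\<in>F. \<forall>b\<in>F. inf a b \<in> F)"

definition ultrafilter :: "'a::boolean_algebra set \<Rightarrow> bool" where
  "ultrafilter u \<longleftrightarrow> is_filter u \<and> u \<noteq> UNIV \<and>
     (\<forall>F. is_filter F \<and> u \<subseteq> F \<and> F \<noteq> UNIV \<longrightarrow> F = u)"

definition Ul :: "'a::boolean_algebra set set" where
  "Ul = {u. ultrafilter u}"

definition phi :: "'a::boolean_algebra set \<Rightarrow> 'a set set" where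
  "phi F = {u \<in> Ul. F \<subseteq> u}"

text \<open>Closed subsets of the Stone space: exactly the sets phi F for filters F.\<close>
definition stone_closed :: "'a::boolean_algebra set set \<Rightarrow> bool" where
  "stone_closed Z \<longleftrightarrow> (\<exists>F. is_filter F \<and> Z = phi F)"

definition D_imp :: "('a::boolean_algebra \<Rightarrow> 'a \<Rightarrow> 'a) \<Rightarrow> 'a set \<Rightarrow> 'a set \<Rightarrow> 'a set" where
  "D_imp imp u F = {b. \<exists>a\<in>F. imp a b \<in> u}"

definition T_A :: "('a::boolean_algebra \<Rightarrow> 'a \<Rightarrow> 'a) \<Rightarrow> 'a set \<Rightarrow> 'a set set \<Rightarrow> 'a set \<Rightarrow> bool" where
  "T_A imp u Z v \<longleftrightarrow> (\<exists>F. is_filter F \<and> Z = phi F \<and> D_imp imp u F \<subseteq> v)"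

definition C_set :: "('a::boolean_algebra \<Rightarrow> 'a \<Rightarrow> 'a) \<Rightarrow> 'a set \<Rightarrow> 'a set \<Rightarrow> 'a set set set" where
  "C_set imp x y = {Z. stone_closed Z \<and> T_A imp x Z y}"

definition TA_closed :: "('a::boolean_algebra \<Rightarrow> 'a \<Rightarrow> 'a) \<Rightarrow> 'a set set \<Rightarrow> bool" where
  "TA_closed imp Y \<longleftrightarrow> stone_closed Y \<and>
     (\<forall>x\<in>Ul. \<forall>y\<in>Ul. \<forall>Z. x \<in> Y \<and> Z \<in> C_set imp x y \<and>
        (\<forall>Z'\<in>C_set imp x y. Z' \<subseteq> Z \<longrightarrow> Z' = Z) \<longrightarrow> Z \<subseteq> Y \<and> y \<in> Y)"

end

theory Submission imports Defs begin

lemma filter_up: "is_filter F \<Longrightarrow> a \<in> F \<Longrightarrow> a \<le> b \<Longrightarrow> b \<in> F"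
  unfolding is_filter_def by blast
lemma filter_inf: "is_filter F \<Longrightarrow> a \<in> F \<Longrightarrow> b \<in> F \<Longrightarrow> inf a b \<in> F"
  unfolding is_filter_def by blast
lemma filter_top: "is_filter F \<Longrightarrow> top \<in> F"
  unfolding is_filter_def by blast
lemma filter_inf_iff: "is_filter F \<Longrightarrow> inf a b \<in> F \<longleftrightarrow> a \<in> F \<and> b \<in> F"
  by (meson filter_inf filter_up inf_le1 inf_le2)
lemma filter_bot: "is_filter F \<Longrightarrow> bot \<in> F \<Longrightarrow> F = UNIV"
  using filter_up by fastforce

lemma chain_union_filter:
  assumes "C \<noteq> {}" "subset.chain A C" "\<forall>G\<in>A. is_filter G"
  shows "is_filter (\<Union>C)"
proof -
  have ch: "\<forall>X\<in>C. \<forall>Y\<in>C. X \<subseteq> Y \<or> Y \<subseteq> X" and CA: "C \<subseteq> A"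
    using assms(2) unfolding subset.chain_def by auto
  show ?thesis unfolding is_filter_def
  proof (intro conjI ballI allI impI)
    show "top \<in> \<Union>C" using assms(1) CA assms(3) filter_top by blast
  next
    fix a b assume "a \<in> \<Union>C" "a \<le> b" then show "b \<in> \<Union>C"
      using CA assms(3) filter_up by blast
  next
    fix a b assume a: "a \<in> \<Union>C" and b: "b \<in> \<Union>C"
    then obtain X Y where X: "X \<in> C" "a \<in> X" and Y: "Y \<in> C" "b \<in> Y" by blast
    from ch X Y have "X \<subseteq> Y \<or> Y \<subseteq> X" by blast
    then show "inf a b \<in> \<Union>C"
      using X Y CA assms(3) filter_inf by (metis UnionI in_mono subsetD)
  qed
qed

lemma max_filter:
  assumes "is_filter G0" "Q G0"
    and ch: "\<And>C. C \<noteq> {} \<Longrightarrow> subset.chain {G. is_filter G \<and> G0 \<subseteq> G \<and> Q G} C \<Longrightarrow> Q (\<Union>C)"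
  shows "\<exists>M. is_filter M \<and> G0 \<subseteq> M \<and> Q M \<and> (\<forall>G. is_filter G \<and> M \<subseteq> G \<and> Q G \<longrightarrow> G = M)"
proof -
  let ?A = "{G. is_filter G \<and> G0 \<subseteq> G \<and> Q G}"
  have "\<exists>M\<in>?A. \<forall>X\<in>?A. M \<subseteq> X \<longrightarrow> X = M"
  proof (rule subset_Zorn_nonempty)
    show "?A \<noteq> {}" using assms(1,2) by blast
  next
    fix C assume C: "C \<noteq> {}" "subset.chain ?A C"
    have "is_filter (\<Union>C)" by (rule chain_union_filter[OF C]) auto
    moreover have "G0 \<subseteq> \<Union>C" using C unfolding subset.chain_def by blast
    moreover have "Q (\<Union>C)" using ch C by blast
    ultimately show "\<Union>C \<in> ?A" by blast
  qed
  then show ?thesis by (metis (mono_tags, lifting) mem_Collect_eq subset_trans)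
qed

definition genf :: "'a::boolean_algebra set \<Rightarrow> 'a set \<Rightarrow> 'a set" where
  "genf F G = {b. \<exists>f\<in>F. \<exists>g\<in>G. inf f g \<le> b}"

lemma genf_filter: assumes F: "is_filter F" and G: "is_filter G" shows "is_filter (genf F G)"
  unfolding is_filter_def
proof (intro conjI ballI allI impI)
  have "inf top top \<le> (top::'a)" by simp
  then show "top \<in> genf F G" unfolding genf_def using filter_top[OF F] filter_top[OF G] by blast
next
  fix a b assume "a \<in> genf F G" "a \<le> b"
  then show "b \<in> genf F G" unfolding genf_def using order_trans by blast
next
  fix a b assume "a \<in> genf F G" "b \<in> genf F G"
  then obtain f g f' g' where h: "f \<in> F" "g \<in> G" "inf f g \<le> a" "f' \<in> F" "g' \<in> G" "inf f' g' \<le> b"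
    unfolding genf_def by blast
  have "inf (inf f f') (inf g g') \<le> inf f g" by (intro inf_mono inf_le1)
  moreover have "inf (inf f f') (inf g g') \<le> inf f' g'" by (intro inf_mono inf_le2)
  ultimately have "inf (inf f f') (inf g g') \<le> inf a b"
    using h(3,6) by (meson le_infI order_trans)
  moreover have "inf f f' \<in> F" using filter_inf[OF F h(1,4)] .
  moreover have "inf g g' \<in> G" using filter_inf[OF G h(2,5)] .
  ultimately show "inf a b \<in> genf F G" unfolding genf_def by blast
qed

lemma genf_sub1: "is_filter G \<Longrightarrow> F \<subseteq> genf F G"
proof
  fix x assume G: "is_filter G" and x: "x \<in> F"
  have "inf x top \<le> x" by simp
  then show "x \<in> genf F G" unfolding genf_def using x filter_top[OF G] by blast
qed
lemma genf_sub2: "is_filter F \<Longrightarrow> G \<subseteq> genf F G"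
proof
  fix x assume F: "is_filter F" and x: "x \<in> G"
  have "inf top x \<le> x" by simp
  then show "x \<in> genf F G" unfolding genf_def using x filter_top[OF F] by blast
qed

definition principal :: "'a::boolean_algebra \<Rightarrow> 'a set" where
  "principal a = {b. a \<le> b}"

lemma principal_filter: "is_filter (principal a)"
  unfolding is_filter_def principal_def by auto

lemma ultrafilter_iff:
  "ultrafilter u \<longleftrightarrow> is_filter u \<and> bot \<notin> u \<and> (\<forall>a. a \<in> u \<or> - a \<in> u)"
proof
  assume u: "ultrafilter u"
  then have fu: "is_filter u" and nu: "u \<noteq> UNIV" unfolding ultrafilter_def by auto
  have "bot \<notin> u" using filter_bot[OF fu] nu by blast
  moreover have "a \<in> u \<or> - a \<in> u" for a
  proof (rule ccontr)
    assume n: "\<not> (a \<in> u \<or> - a \<in> u)"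
    have g: "is_filter (genf (principal a) u)" using genf_filter principal_filter fu by blast
    have s: "u \<subseteq> genf (principal a) u" using genf_sub2 principal_filter by blast
    have "a \<in> genf (principal a) u" using genf_sub1 fu unfolding principal_def by blast
    then have "genf (principal a) u = UNIV"
    proof -
      assume a: "a \<in> genf (principal a) u"
      show ?thesis
      proof (rule ccontr)
        assume "genf (principal a) u \<noteq> UNIV"
        then have "genf (principal a) u = u" using u g s unfolding ultrafilter_def by blast
        then show False using a n by blast
      qed
    qed
    then have "bot \<in> genf (principal a) u" by simp
    then obtain f g where "a \<le> f" "g \<in> u" "inf f g \<le> bot" unfolding genf_def principal_def
      by blast
    then have "inf a g \<le> bot" by (meson inf_mono order_refl order_trans)
    then have "g \<le> - a" using inf_shunt[of g a] by (simp add: inf_commute bot_unique)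
    have "- a \<in> u" by (rule filter_up[OF fu \<open>g \<in> u\<close> \<open>g \<le> - a\<close>])
    then show False using n by blast
  qed
  ultimately show "is_filter u \<and> bot \<notin> u \<and> (\<forall>a. a \<in> u \<or> - a \<in> u)" using fu by blast
next
  assume h: "is_filter u \<and> bot \<notin> u \<and> (\<forall>a. a \<in> u \<or> - a \<in> u)"
  show "ultrafilter u" unfolding ultrafilter_def
  proof (intro conjI allI impI)
    show "is_filter u" using h by blast
    show "u \<noteq> UNIV" using h by blast
    fix F assume F: "is_filter F \<and> u \<subseteq> F \<and> F \<noteq> UNIV"
    show "F = u"
    proof (rule ccontr)
      assume "F \<noteq> u" then obtain b where "b \<in> F" "b \<notin> u" using F by blast
      then have "- b \<in> F" using h F by blast
      then have "bot \<in> F" using filter_inf[of F b "-b"] F \<open>b \<in> F\<close> by simp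
      then show False using filter_bot[of F] F by blast
    qed
  qed
qed

lemma ultrafilter_exists:
  assumes F: "is_filter F" and e: "e \<notin> F"
  shows "\<exists>u\<in>Ul. F \<subseteq> u \<and> e \<notin> u"
proof -
  obtain M where M: "is_filter M" "F \<subseteq> M" "e \<notin> M"
    and mx: "\<forall>G. is_filter G \<and> M \<subseteq> G \<and> e \<notin> G \<longrightarrow> G = M"
  proof -
    have ch: "\<And>C. C \<noteq> {} \<Longrightarrow> subset.chain {G. is_filter G \<and> F \<subseteq> G \<and> e \<notin> G} C \<Longrightarrow> e \<notin> \<Union>C"
      unfolding subset.chain_def by blast
    show ?thesis using max_filter[of F "\<lambda>G. e \<notin> G", OF F e ch] that by blast
  qed
  have gen: "e \<in> genf (principal a) M" if "a \<notin> M" for a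
  proof (rule ccontr)
    assume "e \<notin> genf (principal a) M"
    then have "genf (principal a) M = M"
      using mx genf_filter[OF principal_filter M(1)] genf_sub2[OF principal_filter] by blast
    moreover have "a \<in> genf (principal a) M" using genf_sub1 M(1) unfolding principal_def by blast
    ultimately show False using that by blast
  qed
  have compl: "a \<in> M \<or> - a \<in> M" for a
  proof (rule ccontr)
    assume n: "\<not> (a \<in> M \<or> - a \<in> M)"
    obtain f g where fg: "a \<le> f" "g \<in> M" "inf f g \<le> e"
      using gen n unfolding genf_def principal_def by blast
    then have g: "g \<in> M" "inf a g \<le> e" by (meson inf_mono order_refl order_trans)+
    obtain f g' where fg': "(- a) \<le> f" "g' \<in> M" "inf f g' \<le> e"
      using gen n unfolding genf_def principal_def by blast
    then have g': "g' \<in> M" "inf (- a) g' \<le> e" by (meson inf_mono order_refl order_trans)+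
    have "inf g g' = sup (inf a (inf g g')) (inf (- a) (inf g g'))"
      by (metis inf_sup_distrib2 inf_top_left sup_compl_top sup_commute)
    also have "\<dots> \<le> e" using g g'
      by (meson inf.coboundedI1 inf.coboundedI2 inf_mono le_supI order_refl order_trans)
    finally have le: "inf g g' \<le> e" .
    have "inf g g' \<in> M" by (rule filter_inf[OF M(1) g(1) g'(1)])
    then have "e \<in> M" by (rule filter_up[OF M(1) _ le])
    then show False using M by blast
  qed
  have "bot \<notin> M" using M(3) filter_up[OF M(1) _ bot_least, of e] by blast
  then have "M \<in> Ul" by (simp add: Ul_def ultrafilter_iff compl M(1))
  then show ?thesis using M by blast
qed

lemma Ul_filter: "u \<in> Ul \<Longrightarrow> is_filter u"
  unfolding Ul_def ultrafilter_def by blast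
lemma Ul_iff: "u \<in> Ul \<Longrightarrow> is_filter u \<and> bot \<notin> u \<and> (\<forall>a. a \<in> u \<or> - a \<in> u)"
  using ultrafilter_iff[of u] unfolding Ul_def by blast
lemma Ul_compl: "u \<in> Ul \<Longrightarrow> a \<in> u \<or> - a \<in> u"
  using Ul_iff by blast
lemma Ul_not_both: "u \<in> Ul \<Longrightarrow> a \<in> u \<Longrightarrow> - a \<in> u \<Longrightarrow> False"
proof -
  assume u: "u \<in> Ul" "a \<in> u" "- a \<in> u"
  have "inf a (- a) \<in> u" using filter_inf[OF Ul_filter[OF u(1)] u(2,3)] .
  then show False using Ul_iff[OF u(1)] by simp
qed
lemma Ul_mp: "u \<in> Ul \<Longrightarrow> p \<in> u \<Longrightarrow> sup (- p) q \<in> u \<Longrightarrow> q \<in> u"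
proof -
  assume u: "u \<in> Ul" "p \<in> u" "sup (- p) q \<in> u"
  have "inf p (sup (- p) q) \<le> q" by (simp add: inf_sup_distrib1)
  then show ?thesis using u Ul_filter filter_inf filter_up by blast
qed

lemma phi_anti: "is_filter F \<Longrightarrow> is_filter G \<Longrightarrow> phi G \<subseteq> phi F \<longleftrightarrow> F \<subseteq> G"
proof
  assume F: "is_filter F" and G: "is_filter G" and s: "phi G \<subseteq> phi F"
  show "F \<subseteq> G"
  proof
    fix f assume "f \<in> F"
    show "f \<in> G"
    proof (rule ccontr)
      assume "f \<notin> G"
      then obtain u where "u \<in> Ul" "G \<subseteq> u" "f \<notin> u" using ultrafilter_exists G by blast
      then show False using s \<open>f \<in> F\<close> unfolding phi_def by blast
    qed
  qed
qed (auto simp: phi_def)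


context
  fixes imp :: "'a::boolean_algebra \<Rightarrow> 'a \<Rightarrow> 'a"
  assumes CA: "conditional_algebra imp"
begin

lemma imp_top: "imp a top = top"
  using CA unfolding conditional_algebra_def by blast
lemma imp_inf: "inf (imp a b) (imp a c) = imp a (inf b c)"
  using CA unfolding conditional_algebra_def by blast
lemma imp_sup: "imp (sup a b) c \<le> inf (imp a c) (imp b c)"
  using CA unfolding conditional_algebra_def by blast
lemma imp_mono2: "b \<le> c \<Longrightarrow> imp a b \<le> imp a c"
proof -
  assume "b \<le> c"
  then have "imp a b = imp a (inf b c)" by (simp add: inf_absorb1)
  also have "\<dots> = inf (imp a b) (imp a c)" by (simp add: imp_inf)
  also have "\<dots> \<le> imp a c" by simp
  finally show ?thesis .
qed
lemma imp_anti1: "a \<le> b \<Longrightarrow> imp b c \<le> imp a c"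
proof -
  assume "a \<le> b"
  then have "imp b c = imp (sup a b) c" by (simp add: sup_absorb2)
  also have "\<dots> \<le> inf (imp a c) (imp b c)" by (rule imp_sup)
  also have "\<dots> \<le> imp a c" by simp
  finally show ?thesis .
qed

lemma H_filter: "is_filter x \<Longrightarrow> is_filter {b. imp a b \<in> x}"
  unfolding is_filter_def
proof (intro conjI ballI allI impI)
  assume x: "top \<in> x \<and> (\<forall>a\<in>x. \<forall>b. a \<le> b \<longrightarrow> b \<in> x) \<and> (\<forall>a\<in>x. \<forall>b\<in>x. inf a b \<in> x)"
  show "top \<in> {b. imp a b \<in> x}" using x by (simp add: imp_top)
  fix b c
  show "b \<in> {b. imp a b \<in> x} \<Longrightarrow> b \<le> c \<Longrightarrow> c \<in> {b. imp a b \<in> x}"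
    using x imp_mono2[of b c a] by blast
  show "b \<in> {b. imp a b \<in> x} \<Longrightarrow> c \<in> {b. imp a b \<in> x} \<Longrightarrow> inf b c \<in> {b. imp a b \<in> x}"
    using x imp_inf[of a b c] by (metis mem_Collect_eq)
qed

lemma D_principal: "is_filter x \<Longrightarrow> D_imp imp x (principal a) \<subseteq> {b. imp a b \<in> x}"
proof
  fix b assume x: "is_filter x" and "b \<in> D_imp imp x (principal a)"
  then obtain a' where "a \<le> a'" "imp a' b \<in> x" unfolding D_imp_def principal_def by blast
  then show "b \<in> {b. imp a b \<in> x}" using filter_up[OF x _ imp_anti1] by blast
qed

lemma min_exists:
  assumes x: "x \<in> Ul" and y: "y \<in> Ul" and G0: "is_filter G0" and D0: "D_imp imp x G0 \<subseteq> y"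
  shows "\<exists>M. is_filter M \<and> G0 \<subseteq> M \<and> D_imp imp x M \<subseteq> y \<and> phi M \<in> C_set imp x y \<and>
           (\<forall>Z'\<in>C_set imp x y. Z' \<subseteq> phi M \<longrightarrow> Z' = phi M)"
proof -
  have ch: "\<And>C. C \<noteq> {} \<Longrightarrow> subset.chain {G. is_filter G \<and> G0 \<subseteq> G \<and> D_imp imp x G \<subseteq> y} C
      \<Longrightarrow> D_imp imp x (\<Union>C) \<subseteq> y"
    unfolding subset.chain_def D_imp_def by blast
  obtain M where M: "is_filter M" "G0 \<subseteq> M" "D_imp imp x M \<subseteq> y"
    and mx: "\<forall>G. is_filter G \<and> M \<subseteq> G \<and> D_imp imp x G \<subseteq> y \<longrightarrow> G = M"
    using max_filter[of G0 "\<lambda>G. D_imp imp x G \<subseteq> y", OF G0 D0 ch] by blast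
  have inC: "phi M \<in> C_set imp x y"
    unfolding C_set_def stone_closed_def T_A_def using M by blast
  have "Z' = phi M" if Z': "Z' \<in> C_set imp x y" "Z' \<subseteq> phi M" for Z'
  proof -
    obtain G' where G': "is_filter G'" "Z' = phi G'" "D_imp imp x G' \<subseteq> y"
      using Z'(1) unfolding C_set_def T_A_def by blast
    then have "M \<subseteq> G'" using phi_anti[OF M(1) G'(1)] Z'(2) by blast
    then have "G' = M" using mx G' by blast
    then show ?thesis using G' by simp
  qed
  then show ?thesis using M inC by blast
qed

definition cf :: "'a set \<Rightarrow> bool" where
  "cf F \<longleftrightarrow> is_filter F \<and> (\<forall>f\<in>F. \<forall>a. imp a f \<in> F) \<and>
     (\<forall>f\<in>F. \<forall>a c. sup (- imp (inf a f) c) (imp a c) \<in> F)"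


lemma lemA:
  assumes cfF: "cf F"
  shows "TA_closed imp (phi F)"
proof -
  have F: "is_filter F" using cfF unfolding cf_def by blast
  have c1: "\<And>f a. f \<in> F \<Longrightarrow> imp a f \<in> F" using cfF unfolding cf_def by blast
  have c2: "\<And>f a c. f \<in> F \<Longrightarrow> sup (- imp (inf a f) c) (imp a c) \<in> F" using cfF unfolding cf_def by blast
  have main: "Z \<subseteq> phi F \<and> y \<in> phi F"
    if x: "x \<in> Ul" and y: "y \<in> Ul" and xF: "x \<in> phi F" and Z: "Z \<in> C_set imp x y"
      and mn: "\<forall>Z'\<in>C_set imp x y. Z' \<subseteq> Z \<longrightarrow> Z' = Z" for x y Z
  proof -
    have Fx: "F \<subseteq> x" using xF unfolding phi_def by blast
    have fx: "is_filter x" using Ul_filter[OF x] .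
    obtain G where G: "is_filter G" "Z = phi G" "D_imp imp x G \<subseteq> y"
      using Z unfolding C_set_def T_A_def by blast
    have Fy: "F \<subseteq> y"
    proof
      fix f assume "f \<in> F"
      then have "imp top f \<in> x" using c1 Fx by blast
      then have "f \<in> D_imp imp x G" unfolding D_imp_def using filter_top[OF G(1)] by blast
      then show "f \<in> y" using G(3) by blast
    qed
    let ?G' = "genf F G"
    have G'f: "is_filter ?G'" using genf_filter[OF F G(1)] .
    have DG': "D_imp imp x ?G' \<subseteq> y"
    proof
      fix c assume "c \<in> D_imp imp x ?G'"
      then obtain b where b: "b \<in> ?G'" "imp b c \<in> x" unfolding D_imp_def by blast
      then obtain f g where fg: "f \<in> F" "g \<in> G" "inf f g \<le> b" unfolding genf_def by blast
      have "imp b c \<le> imp (inf g f) c" using imp_anti1[of "inf g f" b c] fg(3) by (simp add: inf_commute)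
      then have p: "imp (inf g f) c \<in> x" using filter_up[OF fx b(2)] by blast
      have "sup (- imp (inf g f) c) (imp g c) \<in> x" using c2[OF fg(1)] Fx by blast
      then have "imp g c \<in> x" using Ul_mp[OF x p] by blast
      then have "c \<in> D_imp imp x G" unfolding D_imp_def using fg(2) by blast
      then show "c \<in> y" using G(3) by blast
    qed
    have inC: "phi ?G' \<in> C_set imp x y"
      unfolding C_set_def stone_closed_def T_A_def using G'f DG' by blast
    have "G \<subseteq> ?G'" using genf_sub2[OF F] .
    then have "phi ?G' \<subseteq> Z" using phi_anti[OF G(1) G'f] G(2) by blast
    then have "phi ?G' = phi G" using mn inC G(2) by blast
    then have "?G' \<subseteq> G" using phi_anti[OF G'f G(1)] by blast
    then have "F \<subseteq> G" using genf_sub1[OF G(1), of F] by blast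
    then have "Z \<subseteq> phi F" using phi_anti[OF F G(1)] G(2) by blast
    moreover have "y \<in> phi F" using y Fy unfolding phi_def by blast
    ultimately show ?thesis by blast
  qed
  have "stone_closed (phi F)" unfolding stone_closed_def using F by blast
  then show ?thesis unfolding TA_closed_def using main by blast
qed

lemma keyB:
  assumes TA: "TA_closed imp (phi F)" and F: "is_filter F" and x: "x \<in> Ul" and Fx: "F \<subseteq> x"
    and ae: "imp a e \<notin> x"
  shows "\<exists>y M. y \<in> Ul \<and> e \<notin> y \<and> is_filter M \<and> a \<in> M \<and> F \<subseteq> M \<and> F \<subseteq> y \<and> D_imp imp x M \<subseteq> y"
proof -
  have fx: "is_filter x" using Ul_filter[OF x] .
  have Hf: "is_filter {b. imp a b \<in> x}" using H_filter[OF fx] .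
  obtain y where y: "y \<in> Ul" "{b. imp a b \<in> x} \<subseteq> y" "e \<notin> y"
    using ultrafilter_exists[OF Hf, of e] ae by blast
  have D0: "D_imp imp x (principal a) \<subseteq> y" using D_principal[OF fx, of a] y(2) by blast
  obtain M where M: "is_filter M" "principal a \<subseteq> M" "D_imp imp x M \<subseteq> y" "phi M \<in> C_set imp x y"
    and mn: "\<forall>Z'\<in>C_set imp x y. Z' \<subseteq> phi M \<longrightarrow> Z' = phi M"
    using min_exists[OF x y(1) principal_filter D0] by blast
  have xF: "x \<in> phi F" using x Fx unfolding phi_def by blast
  have "phi M \<subseteq> phi F \<and> y \<in> phi F"
    using TA x y(1) xF M(4) mn unfolding TA_closed_def by blast
  then have "F \<subseteq> M" "F \<subseteq> y" using phi_anti[OF F M(1)] unfolding phi_def by blast+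
  moreover have "a \<in> M" using M(2) unfolding principal_def by blast
  ultimately show ?thesis using y M by blast
qed

lemma lemB:
  assumes TA: "TA_closed imp (phi F)" and F: "is_filter F"
  shows "cf F"
proof -
  have c1: "imp a f \<in> F" if f: "f \<in> F" for f a
  proof (rule ccontr)
    assume "imp a f \<notin> F"
    then obtain x where x: "x \<in> Ul" "F \<subseteq> x" "imp a f \<notin> x" using ultrafilter_exists[OF F] by blast
    then obtain y M where "e \<notin> y" "F \<subseteq> y" if "e = f" for e
      using keyB[OF TA F x(1) x(2) x(3)] by blast
    then show False using f by blast
  qed
  have c2: "sup (- imp (inf a f) c) (imp a c) \<in> F" if f: "f \<in> F" for f a c
  proof (rule ccontr)
    let ?e = "sup (- imp (inf a f) c) (imp a c)"
    assume "?e \<notin> F"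
    then obtain x where x: "x \<in> Ul" "F \<subseteq> x" "?e \<notin> x" using ultrafilter_exists[OF F] by blast
    have fx: "is_filter x" using Ul_filter[OF x(1)] .
    have p: "imp (inf a f) c \<in> x"
    proof (rule ccontr)
      assume "imp (inf a f) c \<notin> x"
      then have "- imp (inf a f) c \<in> x" using Ul_compl[OF x(1)] by blast
      then have "?e \<in> x" using filter_up[OF fx _ sup_ge1] by blast
      then show False using x(3) by blast
    qed
    have q: "imp a c \<notin> x"
    proof
      assume "imp a c \<in> x"
      then have "?e \<in> x" using filter_up[OF fx _ sup_ge2] by blast
      then show False using x(3) by blast
    qed
    obtain y M where yM: "y \<in> Ul" "c \<notin> y" "is_filter M" "a \<in> M" "F \<subseteq> M" "D_imp imp x M \<subseteq> y"
      using keyB[OF TA F x(1) x(2) q] by blast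
    have "inf a f \<in> M" using filter_inf[OF yM(3) yM(4)] yM(5) f by blast
    then have "c \<in> D_imp imp x M" unfolding D_imp_def using p by blast
    then show False using yM by blast
  qed
  show ?thesis unfolding cf_def using F c1 c2 by blast
qed


definition fil :: "'a rel \<Rightarrow> 'a set" where
  "fil \<theta> = {a. (a, top) \<in> \<theta>}"

definition congF :: "'a set \<Rightarrow> 'a rel" where
  "congF F = {(a, b). \<exists>h\<in>F. inf a h = inf b h}"

lemma cong_basic:
  assumes "congruence imp \<theta>"
  shows cong_refl: "(a, a) \<in> \<theta>"
    and cong_sym: "(a, b) \<in> \<theta> \<Longrightarrow> (b, a) \<in> \<theta>"
    and cong_trans: "(a, b) \<in> \<theta> \<Longrightarrow> (b, c) \<in> \<theta> \<Longrightarrow> (a, c) \<in> \<theta>"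
    and cong_inf: "(a, b) \<in> \<theta> \<Longrightarrow> (c, d) \<in> \<theta> \<Longrightarrow> (inf a c, inf b d) \<in> \<theta>"
    and cong_sup: "(a, b) \<in> \<theta> \<Longrightarrow> (c, d) \<in> \<theta> \<Longrightarrow> (sup a c, sup b d) \<in> \<theta>"
    and cong_imp: "(a, b) \<in> \<theta> \<Longrightarrow> (c, d) \<in> \<theta> \<Longrightarrow> (imp a c, imp b d) \<in> \<theta>"
    and cong_neg: "(a, b) \<in> \<theta> \<Longrightarrow> (- a, - b) \<in> \<theta>"
  using assms unfolding congruence_def equiv_def refl_on_def sym_def trans_def by blast+

lemma C1: assumes th: "congruence imp \<theta>" shows "cf (fil \<theta>)"
proof -
  note cb = cong_basic[OF th]
  have "is_filter (fil \<theta>)" unfolding is_filter_def fil_def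
  proof (intro conjI ballI allI impI)
    show "top \<in> {a. (a, top) \<in> \<theta>}" using cb(1) by simp
  next
    fix a b assume a: "a \<in> {a. (a, top) \<in> \<theta>}" and ab: "a \<le> b"
    have "(sup a b, sup top b) \<in> \<theta>" using cb(5)[of a top b b] a cb(1) by simp
    then show "b \<in> {a. (a, top) \<in> \<theta>}" using ab by (simp add: sup_absorb2)
  next
    fix a b assume a: "a \<in> {a. (a, top) \<in> \<theta>}" and b: "b \<in> {a. (a, top) \<in> \<theta>}"
    have "(inf a b, inf top top) \<in> \<theta>" using cb(4)[of a top b top] a b by simp
    then show "inf a b \<in> {a. (a, top) \<in> \<theta>}" by simp
  qed
  moreover have "imp a f \<in> fil \<theta>" if "f \<in> fil \<theta>" for a f
  proof -
    have "(imp a f, imp a top) \<in> \<theta>" using cb(6)[of a a f top] cb(1) that unfolding fil_def by simp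
    then show ?thesis unfolding fil_def by (simp add: imp_top)
  qed
  moreover have "sup (- imp (inf a f) c) (imp a c) \<in> fil \<theta>" if "f \<in> fil \<theta>" for a f c
  proof -
    have "(inf a f, inf a top) \<in> \<theta>" using cb(4)[of a a f top] cb(1) that unfolding fil_def by simp
    then have "(imp (inf a f) c, imp a c) \<in> \<theta>" using cb(6) cb(1) by simp
    then have "(- imp (inf a f) c, - imp a c) \<in> \<theta>" using cb(7) by blast
    then have "(sup (- imp (inf a f) c) (imp a c), sup (- imp a c) (imp a c)) \<in> \<theta>"
      using cb(5) cb(1) by blast
    then show ?thesis unfolding fil_def by (simp add: compl_sup_top)
  qed
  ultimately show ?thesis unfolding cf_def by blast
qed

lemma bool1: "inf (a::'a) (sup (inf a b) (inf (- a) (- b))) = inf a b"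
proof -
  have "inf a (sup (inf a b) (inf (- a) (- b))) = sup (inf a (inf a b)) (inf a (inf (- a) (- b)))"
    by (rule inf_sup_distrib1)
  also have "inf a (inf a b) = inf a b" by (simp add: inf_assoc[symmetric])
  also have "inf a (inf (- a) (- b)) = bot" by simp
  finally show ?thesis by simp
qed
lemma bool2: "inf (b::'a) (sup (inf a b) (inf (- a) (- b))) = inf a b"
proof -
  have "inf b (sup (inf a b) (inf (- a) (- b))) = sup (inf b (inf a b)) (inf b (inf (- a) (- b)))"
    by (rule inf_sup_distrib1)
  also have "inf b (inf a b) = inf a b" by (simp add: inf_commute inf_left_commute)
  also have "inf b (inf (- a) (- b)) = bot" by (simp add: inf_commute inf_left_commute)
  finally show ?thesis by simp
qed

lemma C2: assumes th: "congruence imp \<theta>" shows "\<theta> = congF (fil \<theta>)"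
proof -
  note cb = cong_basic[OF th]
  have "(a, b) \<in> congF (fil \<theta>)" if ab: "(a, b) \<in> \<theta>" for a b
  proof -
    let ?h = "sup (inf a b) (inf (- a) (- b))"
    have "(inf a b, inf a a) \<in> \<theta>" using cb(4)[OF cb(1)[of a] cb(2)[OF ab]] by simp
    moreover have "(inf (- a) (- b), inf (- a) (- a)) \<in> \<theta>"
      using cb(4)[OF cb(1)[of "- a"] cb(7)[OF cb(2)[OF ab]]] by simp
    ultimately have "(?h, sup (inf a a) (inf (- a) (- a))) \<in> \<theta>" using cb(5) by blast
    then have "?h \<in> fil \<theta>" unfolding fil_def by (simp add: sup_compl_top)
    moreover have "inf a ?h = inf b ?h" using bool1[of a b] bool2[of b a] by simp
    ultimately show ?thesis unfolding congF_def by blast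
  qed
  moreover have "(a, b) \<in> \<theta>" if ab: "(a, b) \<in> congF (fil \<theta>)" for a b
  proof -
    obtain h where h: "(h, top) \<in> \<theta>" "inf a h = inf b h" using ab unfolding congF_def fil_def by blast
    have 1: "(inf a h, a) \<in> \<theta>" using cb(4)[OF cb(1) h(1), of a] by simp
    have 2: "(inf b h, b) \<in> \<theta>" using cb(4)[OF cb(1) h(1), of b] by simp
    have "(a, inf b h) \<in> \<theta>" using cb(2)[OF 1] h(2) by simp
    then show ?thesis using cb(3)[OF _ 2] by blast
  qed
  ultimately show ?thesis by auto
qed


lemma cgI: "h \<in> F \<Longrightarrow> inf a h = inf b h \<Longrightarrow> (a, b) \<in> congF F"
  unfolding congF_def by blast
lemma cgE: "(a, b) \<in> congF F \<Longrightarrow> \<exists>h\<in>F. inf a h = inf b h"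
  unfolding congF_def by blast
lemma ext1: "inf (a::'a) h = inf b h \<Longrightarrow> inf a (inf h k) = inf b (inf h k)"
  by (metis inf_assoc)
lemma ext2: "inf (a::'a) h = inf b h \<Longrightarrow> inf a (inf k h) = inf b (inf k h)"
  by (metis inf_assoc inf_commute)
lemma cg_sym: "(a, b) \<in> congF F \<Longrightarrow> (b, a) \<in> congF F"
proof -
  assume "(a, b) \<in> congF F"
  then obtain h where "h \<in> F" "inf a h = inf b h" using cgE by blast
  then show ?thesis using cgI[of h F b a] by simp
qed
lemma cg_trans: assumes F: "is_filter F" and ab: "(a, b) \<in> congF F" and bc: "(b, c) \<in> congF F"
  shows "(a, c) \<in> congF F"
proof -
  obtain h1 h2 where h: "h1 \<in> F" "inf a h1 = inf b h1" "h2 \<in> F" "inf b h2 = inf c h2"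
    using cgE[OF ab] cgE[OF bc] by blast
  have "inf a (inf h1 h2) = inf b (inf h1 h2)" using ext1[OF h(2)] .
  also have "\<dots> = inf c (inf h1 h2)" using ext2[OF h(4)] .
  finally show ?thesis using cgI filter_inf[OF F h(1) h(3)] by blast
qed

lemma inf_split: "inf (inf (a::'a) c) H = inf (inf a H) (inf c H)"
  by (simp add: inf_aci)
lemma neg_h: "inf (- (a::'a)) h = inf (- (inf a h)) h"
  by (simp add: inf_sup_distrib2)
lemma absorb_e: "(q::'a) \<le> p \<Longrightarrow> inf q (sup (- p) q) = inf p (sup (- p) q)"
proof -
  assume qp: "q \<le> p"
  have "inf q (sup (- p) q) = q" by (simp add: inf_absorb1)
  moreover have "inf p (sup (- p) q) = inf p q" by (simp add: inf_sup_distrib1)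
  moreover have "inf p q = q" using qp by (simp add: inf_absorb2)
  ultimately show ?thesis by simp
qed

lemma C3: assumes cfF: "cf F" shows "congruence imp (congF F)"
proof -
  have F: "is_filter F" using cfF unfolding cf_def by blast
  have c1: "\<And>f a. f \<in> F \<Longrightarrow> imp a f \<in> F" using cfF unfolding cf_def by blast
  have c2: "\<And>f a c. f \<in> F \<Longrightarrow> sup (- imp (inf a f) c) (imp a c) \<in> F" using cfF unfolding cf_def by blast
  have refl: "(a, a) \<in> congF F" for a using cgI[OF filter_top[OF F]] by blast
  have eq: "equiv UNIV (congF F)"
  proof (rule equivI)
    show "congF F \<subseteq> UNIV \<times> UNIV" by simp
    show "refl_on UNIV (congF F)" by (rule refl_onI) (rule refl)
    show "sym (congF F)" by (rule symI) (rule cg_sym)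
    show "trans (congF F)" by (rule transI) (rule cg_trans[OF F])
  qed
  have inf_c: "(inf a c, inf b d) \<in> congF F" if ab: "(a, b) \<in> congF F" and cd: "(c, d) \<in> congF F" for a b c d
  proof -
    obtain h1 h2 where h: "h1 \<in> F" "inf a h1 = inf b h1" "h2 \<in> F" "inf c h2 = inf d h2"
      using cgE[OF ab] cgE[OF cd] by blast
    have "inf (inf a c) (inf h1 h2) = inf (inf a (inf h1 h2)) (inf c (inf h1 h2))" by (rule inf_split)
    also have "\<dots> = inf (inf b (inf h1 h2)) (inf d (inf h1 h2))" using ext1[OF h(2)] ext2[OF h(4)] by simp
    also have "\<dots> = inf (inf b d) (inf h1 h2)" by (rule inf_split[symmetric])
    finally show ?thesis using cgI filter_inf[OF F h(1) h(3)] by blast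
  qed
  have sup_c: "(sup a c, sup b d) \<in> congF F" if ab: "(a, b) \<in> congF F" and cd: "(c, d) \<in> congF F" for a b c d
  proof -
    obtain h1 h2 where h: "h1 \<in> F" "inf a h1 = inf b h1" "h2 \<in> F" "inf c h2 = inf d h2"
      using cgE[OF ab] cgE[OF cd] by blast
    have "inf (sup a c) (inf h1 h2) = sup (inf a (inf h1 h2)) (inf c (inf h1 h2))" by (rule inf_sup_distrib2)
    also have "\<dots> = sup (inf b (inf h1 h2)) (inf d (inf h1 h2))" using ext1[OF h(2)] ext2[OF h(4)] by simp
    also have "\<dots> = inf (sup b d) (inf h1 h2)" by (rule inf_sup_distrib2[symmetric])
    finally show ?thesis using cgI filter_inf[OF F h(1) h(3)] by blast
  qed
  have neg_c: "(- a, - b) \<in> congF F" if ab: "(a, b) \<in> congF F" for a b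
  proof -
    obtain h where h: "h \<in> F" "inf a h = inf b h" using cgE[OF ab] by blast
    have "inf (- a) h = inf (- b) h" using neg_h[of a h] neg_h[of b h] h(2) by simp
    then show ?thesis using cgI h(1) by blast
  qed
  have imp2: "(imp a c, imp a d) \<in> congF F" if cd: "(c, d) \<in> congF F" for a c d
  proof -
    obtain h where h: "h \<in> F" "inf c h = inf d h" using cgE[OF cd] by blast
    have gen: "(imp a x, imp a (inf x h)) \<in> congF F" for x
    proof -
      have e1: "inf (imp a x) (imp a h) = imp a (inf x h)" by (rule imp_inf)
      have "inf (imp a (inf x h)) (imp a h) = inf (imp a x) (imp a h)"
        unfolding e1[symmetric] by (simp add: inf_assoc)
      then have "inf (imp a x) (imp a h) = inf (imp a (inf x h)) (imp a h)" by simp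
      then show ?thesis using cgI c1[OF h(1)] by blast
    qed
    have "(imp a c, imp a (inf d h)) \<in> congF F" using gen[of c] h(2) by simp
    then show ?thesis using cg_trans[OF F _ cg_sym[OF gen[of d]]] by blast
  qed
  have imp1: "(imp a c, imp b c) \<in> congF F" if ab: "(a, b) \<in> congF F" for a b c
  proof -
    obtain h where h: "h \<in> F" "inf a h = inf b h" using cgE[OF ab] by blast
    have gen: "(imp x c, imp (inf x h) c) \<in> congF F" for x
    proof -
      have "imp x c \<le> imp (inf x h) c" by (rule imp_anti1) simp
      then have "inf (imp x c) (sup (- imp (inf x h) c) (imp x c)) =
                 inf (imp (inf x h) c) (sup (- imp (inf x h) c) (imp x c))" by (rule absorb_e)
      then show ?thesis using cgI c2[OF h(1)] by blast
    qed
    have "(imp a c, imp (inf b h) c) \<in> congF F" using gen[of a] h(2) by simp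
    then show ?thesis using cg_trans[OF F _ cg_sym[OF gen[of b]]] by blast
  qed
  have imp_c: "(imp a c, imp b d) \<in> congF F" if ab: "(a, b) \<in> congF F" and cd: "(c, d) \<in> congF F" for a b c d
    using cg_trans[OF F imp2[OF cd] imp1[OF ab]] .
  show ?thesis unfolding congruence_def by (simp add: eq inf_c sup_c imp_c neg_c)
qed

lemma C4: assumes F: "is_filter F" shows "fil (congF F) = F"
proof
  show "fil (congF F) \<subseteq> F"
  proof
    fix a assume "a \<in> fil (congF F)"
    then obtain h where h: "h \<in> F" "inf a h = inf top h" using cgE unfolding fil_def by blast
    then have "h \<le> a" by (metis inf.orderI inf_commute inf_top_left)
    then show "a \<in> F" using filter_up[OF F h(1)] by blast
  qed
  show "F \<subseteq> fil (congF F)"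
  proof
    fix a assume "a \<in> F"
    moreover have "inf a a = inf top a" by simp
    ultimately show "a \<in> fil (congF F)" unfolding fil_def using cgI by blast
  qed
qed

lemma congF_mono: "F \<subseteq> G \<Longrightarrow> congF F \<subseteq> congF G"
  unfolding congF_def by blast

lemma fil_filter: "congruence imp \<theta> \<Longrightarrow> is_filter (fil \<theta>)"
  using C1 unfolding cf_def by blast

lemma main_thm:
  "\<exists>f. bij_betw f {\<theta>. congruence imp \<theta>} {Y. TA_closed imp Y} \<and>
    (\<forall>\<theta>\<in>{\<theta>. congruence imp \<theta>}. \<forall>\<psi>\<in>{\<theta>. congruence imp \<theta>}.
        \<theta> \<subseteq> \<psi> \<longleftrightarrow> f \<psi> \<subseteq> f \<theta>)"
proof -
  define f where "f \<theta> = phi (fil \<theta>)" for \<theta> :: "'a rel"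
  have ord: "\<theta> \<subseteq> \<psi> \<longleftrightarrow> f \<psi> \<subseteq> f \<theta>" if th: "congruence imp \<theta>" and ps: "congruence imp \<psi>" for \<theta> \<psi>
  proof -
    have "f \<psi> \<subseteq> f \<theta> \<longleftrightarrow> fil \<theta> \<subseteq> fil \<psi>"
      unfolding f_def using phi_anti[OF fil_filter[OF th] fil_filter[OF ps]] .
    moreover have "fil \<theta> \<subseteq> fil \<psi> \<longleftrightarrow> \<theta> \<subseteq> \<psi>"
    proof
      assume "fil \<theta> \<subseteq> fil \<psi>"
      then have "congF (fil \<theta>) \<subseteq> congF (fil \<psi>)" by (rule congF_mono)
      then show "\<theta> \<subseteq> \<psi>" using C2[OF th] C2[OF ps] by simp
    qed (auto simp: fil_def)
    ultimately show ?thesis by simp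
  qed
  have inj: "inj_on f {\<theta>. congruence imp \<theta>}"
  proof (rule inj_onI)
    fix \<theta> \<psi> assume "\<theta> \<in> {\<theta>. congruence imp \<theta>}" "\<psi> \<in> {\<theta>. congruence imp \<theta>}" "f \<theta> = f \<psi>"
    then show "\<theta> = \<psi>" using ord[of \<theta> \<psi>] ord[of \<psi> \<theta>] by auto
  qed
  have img1: "f ` {\<theta>. congruence imp \<theta>} \<subseteq> {Y. TA_closed imp Y}"
    unfolding f_def using lemA C1 by blast
  have img2: "{Y. TA_closed imp Y} \<subseteq> f ` {\<theta>. congruence imp \<theta>}"
  proof
    fix Y assume "Y \<in> {Y. TA_closed imp Y}"
    then have TA: "TA_closed imp Y" by simp
    then obtain F where F: "is_filter F" "Y = phi F" unfolding TA_closed_def stone_closed_def by blast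
    have cfF: "cf F" using lemB TA F by blast
    have "congruence imp (congF F)" using C3[OF cfF] .
    moreover have "f (congF F) = Y" unfolding f_def using C4[OF F(1)] F(2) by simp
    ultimately show "Y \<in> f ` {\<theta>. congruence imp \<theta>}" by blast
  qed
  have "bij_betw f {\<theta>. congruence imp \<theta>} {Y. TA_closed imp Y}"
    unfolding bij_betw_def using inj img1 img2 by blast
  then show ?thesis using ord by blast
qed

end

theorem theorem8p4:
  fixes imp :: "'a::boolean_algebra \<Rightarrow> 'a \<Rightarrow> 'a"
  assumes "conditional_algebra imp"
  shows "\<exists>f. bij_betw f {\<theta>. congruence imp \<theta>} {Y. TA_closed imp Y} \<and>
    (\<forall>\<theta>\<in>{\<theta>. congruence imp \<theta>}. \<forall>\<psi>\<in>{\<theta>. congruence imp \<theta>}.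
        \<theta> \<subseteq> \<psi> \<longleftrightarrow> f \<psi> \<subseteq> f \<theta>)"
  using main_thm[OF assms] .

end
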